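(* For every $A\in\mathbb{R}_+^{n\times n}$, $$\min_{B\in\Omega(A)}\rho(B)\;\leq\;\frac{1}{n}\sum_{i=1}^n\sum_{j=1}^n a_{i,j}\;\leq\;\max_{B\in\Omega(A)}\rho(B).$$
   Context: $\mathbb{R}_+^{n\times n}$ denotes the set of $n\times n$ matrices with nonnegative real entries. For $A=(a_{i,j})\in\mathbb{R}_+^{n\times n}$, the set of row-permuted matrices is $\Omega(A)=\{B\in\mathbb{R}_+^{n\times n}:\ \forall i\ \exists\text{ a permutation }\phi_i \text{ of }\{1,\dots,n\}\text{ with } b_{i,j}=a_{i,\phi_i(j)}\ \forall j\}$, i.e. each row of $B$ is a rearrangement of the corresponding row of $A$. $\rho(B)$ denotes the spectral radius (Perron root) of $B$. $\Omega(A)$ is a finite set. *)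

theory Defs
  imports "Jordan_Normal_Form.Spectral_Radius" "HOL-Combinatorics.Permutations"
begin

definition row_permuted :: "nat \<Rightarrow> real mat \<Rightarrow> real mat set" where
  "row_permuted n A = {B \<in> carrier_mat n n. \<forall>i<n. \<exists>\<phi>. \<phi> permutes {..<n} \<and>
       (\<forall>j<n. B $$ (i, j) = A $$ (i, \<phi> j))}"

definition rho :: "real mat \<Rightarrow> real" where
  "rho B = spectral_radius (map_mat complex_of_real B)"

end

theory Submission
  imports Defs
begin

lemma mv_comp:
  assumes "M \<in> carrier_mat n n" "v \<in> carrier_vec n" "i < n"
  shows "(M *\<^sub>v v) $ i = (\<Sum>j<n. M $$ (i,j) * v $ j)"
  using assms by (auto simp: scalar_prod_def lessThan_atLeast0 intro!: sum.cong)

lemma mod2: "(m::nat) < 2 * n \<Longrightarrow> m mod n = (if m < n then m else m - n)"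
  by (auto simp: le_mod_geq)
lemma add_mod_inj: "k < n \<Longrightarrow> k' < n \<Longrightarrow> (j + k) mod n = (j + k') mod (n::nat) \<Longrightarrow> k = k'"
proof -
  assume a: "k < n" "k' < n" "(j + k) mod n = (j + k') mod n"
  hence n: "n > 0" by simp
  have "(j + k) mod n = (j mod n + k) mod n" "(j + k') mod n = (j mod n + k') mod n"
    by (simp_all add: mod_add_left_eq)
  moreover have "j mod n < n" using n by simp
  ultimately show ?thesis using a mod2[of "j mod n + k" n] mod2[of "j mod n + k'" n]
    by (auto split: if_splits)
qed

lemma rot_bij:
  assumes "(n::nat) > 0"
  shows "bij_betw (\<lambda>k. (j + k) mod n) {..<n} {..<n}"
proof -
  have inj: "inj_on (\<lambda>k. (j + k) mod n) {..<n}"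
    unfolding inj_on_def using add_mod_inj by blast
  have "(\<lambda>k. (j + k) mod n) ` {..<n} \<subseteq> {..<n}" using assms by auto
  with inj have "(\<lambda>k. (j + k) mod n) ` {..<n} = {..<n}" by (intro endo_inj_surj) auto
  with inj show ?thesis by (simp add: bij_betw_def)
qed

definition rotp :: "nat \<Rightarrow> nat \<Rightarrow> nat \<Rightarrow> nat" where
  "rotp n k j = (if j < n then (j + k) mod n else j)"

lemma rotp_lt: "j < n \<Longrightarrow> rotp n k j < n"
  by (simp add: rotp_def)

lemma rotp_permutes: assumes n: "n > 0" shows "rotp n k permutes {..<n}"
proof (rule bij_imp_permutes)
  have b: "bij_betw (\<lambda>j. (k + j) mod n) {..<n} {..<n}" by (rule rot_bij[OF n])
  have e: "\<And>j. j \<in> {..<n} \<Longrightarrow> rotp n k j = (k + j) mod n" by (simp add: rotp_def add.commute)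
  show "bij_betw (rotp n k) {..<n} {..<n}" using bij_betw_cong[of "{..<n}" "rotp n k" "\<lambda>j. (k + j) mod n" "{..<n}", OF e] b by simp
  show "\<And>x. x \<notin> {..<n} \<Longrightarrow> rotp n k x = x" by (simp add: rotp_def)
qed

lemma rot_avg:
  fixes a x :: "nat \<Rightarrow> real"
  assumes n: "n > 0"
  shows "(\<Sum>k<n. \<Sum>j<n. a (rotp n k j) * x j) = (\<Sum>l<n. a l) * (\<Sum>j<n. x j)"
proof -
  have "(\<Sum>k<n. \<Sum>j<n. a (rotp n k j) * x j) = (\<Sum>j<n. (\<Sum>k<n. a ((j + k) mod n)) * x j)"
    by (subst sum.swap) (simp add: rotp_def sum_distrib_right)
  also have "\<dots> = (\<Sum>j<n. (\<Sum>l<n. a l) * x j)"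
    using sum.reindex_bij_betw[OF rot_bij[OF n], of a] by simp
  also have "\<dots> = (\<Sum>l<n. a l) * (\<Sum>j<n. x j)" by (simp add: sum_distrib_left)
  finally show ?thesis .
qed

lemma exists_rot_le:
  fixes a x :: "nat \<Rightarrow> real" assumes n: "n > 0"
  shows "\<exists>k<n. (\<Sum>j<n. a (rotp n k j) * x j) * real n \<le> (\<Sum>l<n. a l) * (\<Sum>j<n. x j)"
proof (rule ccontr)
  assume "\<not> ?thesis"
  hence h: "\<And>k. k<n \<Longrightarrow> (\<Sum>l<n. a l) * (\<Sum>j<n. x j) < (\<Sum>j<n. a (rotp n k j) * x j) * real n" by auto
  have "(\<Sum>k<n. (\<Sum>l<n. a l) * (\<Sum>j<n. x j)) < (\<Sum>k<n. (\<Sum>j<n. a (rotp n k j) * x j) * real n)"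
    using n by (intro sum_strict_mono) (auto intro: h)
  also have "\<dots> = (\<Sum>k<n. \<Sum>j<n. a (rotp n k j) * x j) * real n" by (simp add: sum_distrib_right)
  finally have "(\<Sum>k<n. (\<Sum>l<n. a l) * (\<Sum>j<n. x j)) < (\<Sum>k<n. \<Sum>j<n. a (rotp n k j) * x j) * real n" .
  moreover have "(\<Sum>k<n. (\<Sum>l<n. a l) * (\<Sum>j<n. x j)) = real n * ((\<Sum>l<n. a l) * (\<Sum>j<n. x j))" by simp
  moreover have "(\<Sum>k<n. \<Sum>j<n. a (rotp n k j) * x j) * real n = real n * ((\<Sum>l<n. a l) * (\<Sum>j<n. x j))"
    unfolding rot_avg[OF n, of a x] by (rule mult.commute)
  ultimately show False by linarith
qed

lemma exists_rot_ge:
  fixes a x :: "nat \<Rightarrow> real" assumes n: "n > 0"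
  shows "\<exists>k<n. (\<Sum>j<n. a (rotp n k j) * x j) * real n \<ge> (\<Sum>l<n. a l) * (\<Sum>j<n. x j)"
proof (rule ccontr)
  assume "\<not> ?thesis"
  hence h: "\<And>k. k<n \<Longrightarrow> (\<Sum>l<n. a l) * (\<Sum>j<n. x j) > (\<Sum>j<n. a (rotp n k j) * x j) * real n" by auto
  have "(\<Sum>k<n. (\<Sum>l<n. a l) * (\<Sum>j<n. x j)) > (\<Sum>k<n. (\<Sum>j<n. a (rotp n k j) * x j) * real n)"
    using n by (intro sum_strict_mono) (auto intro: h)
  moreover have "(\<Sum>k<n. (\<Sum>j<n. a (rotp n k j) * x j) * real n) = (\<Sum>k<n. \<Sum>j<n. a (rotp n k j) * x j) * real n" by (simp add: sum_distrib_right)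
  moreover have "(\<Sum>k<n. (\<Sum>l<n. a l) * (\<Sum>j<n. x j)) = real n * ((\<Sum>l<n. a l) * (\<Sum>j<n. x j))" by simp
  moreover have "(\<Sum>k<n. \<Sum>j<n. a (rotp n k j) * x j) * real n = real n * ((\<Sum>l<n. a l) * (\<Sum>j<n. x j))"
    unfolding rot_avg[OF n, of a x] by (rule mult.commute)
  ultimately show False by linarith
qed

lemma rho_nonneg: assumes "B \<in> carrier_mat n n" "n > 0" shows "rho B \<ge> 0"
proof -
  have "map_mat complex_of_real B \<in> carrier_mat n n" using assms by simp
  from spectral_radius_mem_max(1)[OF this assms(2)] show ?thesis
    unfolding rho_def by auto
qed

lemma finite_rp: "finite (row_permuted n A)"
proof -
  let ?S = "{..<n} \<times> {..<n}"
  let ?E = "(\<lambda>p. A $$ p) ` ?S"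
  let ?F = "{f. \<forall>p. (p \<in> ?S \<longrightarrow> f p \<in> ?E) \<and> (p \<notin> ?S \<longrightarrow> f p = 0)}"
  have fin: "finite ?F" by (rule finite_set_of_finite_funs) auto
  have "row_permuted n A \<subseteq> (\<lambda>f. mat n n f) ` ?F"
  proof
    fix B assume B: "B \<in> row_permuted n A"
    hence Bc: "B \<in> carrier_mat n n" unfolding row_permuted_def by auto
    let ?f = "\<lambda>p. if p \<in> ?S then B $$ p else 0"
    have "B = mat n n ?f" using Bc by (auto simp: mat_eq_iff)
    moreover have "?f \<in> ?F"
    proof -
      { fix i j assume ij: "i < n" "j < n"
        from B ij(1) obtain \<phi> where \<phi>: "\<phi> permutes {..<n}" "\<forall>j<n. B $$ (i, j) = A $$ (i, \<phi> j)"
          unfolding row_permuted_def by auto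
        have "\<phi> j < n" using permutes_in_image[OF \<phi>(1)] ij by auto
        hence "B $$ (i,j) \<in> ?E" using \<phi>(2) ij by auto }
      thus ?thesis by auto
    qed
    ultimately show "B \<in> (\<lambda>f. mat n n f) ` ?F" by blast
  qed
  thus ?thesis using finite_subset fin by blast
qed

lemma eig_comp:
  assumes B: "B \<in> carrier_mat n n" and ev: "eigenvector (map_mat complex_of_real B) v \<mu>" and i: "i < n"
  shows "\<mu> * v $ i = (\<Sum>j<n. complex_of_real (B $$ (i,j)) * v $ j)"
proof -
  have Bc: "map_mat complex_of_real B \<in> carrier_mat n n" using B by simp
  from ev B have v: "v \<in> carrier_vec n" and eq: "map_mat complex_of_real B *\<^sub>v v = \<mu> \<cdot>\<^sub>v v"
    unfolding eigenvector_def by auto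
  have "(map_mat complex_of_real B *\<^sub>v v) $ i = (\<Sum>j<n. complex_of_real (B $$ (i,j)) * v $ j)"
    using mv_comp[OF Bc v i] B i by simp
  moreover have "(\<mu> \<cdot>\<^sub>v v) $ i = \<mu> * v $ i" using v i by simp
  ultimately show ?thesis using eq by simp
qed

lemma rho_le:
  assumes B: "B \<in> carrier_mat n n" and n: "n > 0"
    and nonneg: "\<And>i j. i<n \<Longrightarrow> j<n \<Longrightarrow> B $$ (i,j) \<ge> 0"
    and x: "\<And>j. j<n \<Longrightarrow> x j \<ge> 0"
    and zero: "\<And>i j. i<n \<Longrightarrow> j < n \<Longrightarrow> x i = 0 \<Longrightarrow> B $$ (i,j) = 0"
    and le: "\<And>i. i<n \<Longrightarrow> (\<Sum>j<n. B $$ (i,j) * x j) \<le> s * x i"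
    and s: "s \<ge> 0"
  shows "rho B \<le> s"
proof -
  have Bc: "map_mat complex_of_real B \<in> carrier_mat n n" using B by simp
  from spectral_radius_mem_max(1)[OF Bc n] obtain \<mu> where
    mu: "\<mu> \<in> spectrum (map_mat complex_of_real B)" and r: "rho B = norm \<mu>"
    unfolding rho_def by auto
  from mu obtain v where ev: "eigenvector (map_mat complex_of_real B) v \<mu>"
    unfolding spectrum_def eigenvalue_def by auto
  from ev B have v: "v \<in> carrier_vec n" and vnz: "v \<noteq> 0\<^sub>v n"
    unfolding eigenvector_def by auto
  note comp = eig_comp[OF B ev]
  show ?thesis
  proof (cases "\<mu> = 0")
    case True thus ?thesis using r s by simp
  next
    case False
    have vz: "v $ i = 0" if "i < n" "x i = 0" for i
    proof -
      have "\<mu> * v $ i = 0" using comp[OF that(1)] zero[OF that(1) _ that(2)] by simp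
      thus ?thesis using False by simp
    qed
    define c where "c = Max ((\<lambda>j. norm (v $ j) / x j) ` {..<n})"
    have fin: "finite ((\<lambda>j. norm (v $ j) / x j) ` {..<n})" by simp
    have bound: "norm (v $ j) \<le> c * x j" if "j < n" for j
    proof (cases "x j = 0")
      case True thus ?thesis using vz[OF that] by simp
    next
      case False
      hence xp: "x j > 0" using x[OF that] by simp
      have "norm (v $ j) / x j \<le> c" unfolding c_def using that by (intro Max_ge[OF fin]) auto
      thus ?thesis using xp by (simp add: field_simps)
    qed
    have "\<exists>j<n. v $ j \<noteq> 0"
    proof (rule ccontr)
      assume "\<not> ?thesis" hence "v = 0\<^sub>v n" using v by (intro eq_vecI) auto
      with vnz show False by simp
    qed
    then obtain j0 where j0: "j0 < n" "v $ j0 \<noteq> 0" by blast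
    have "x j0 \<noteq> 0" using vz j0 by auto
    hence "norm (v $ j0) / x j0 > 0" using x[OF j0(1)] j0 by simp
    moreover have "norm (v $ j0) / x j0 \<le> c" unfolding c_def using j0 by (intro Max_ge[OF fin]) auto
    ultimately have cpos: "c > 0" by linarith
    have "c \<in> (\<lambda>j. norm (v $ j) / x j) ` {..<n}" unfolding c_def using n by (intro Max_in[OF fin]) auto
    then obtain i where i: "i < n" "c = norm (v $ i) / x i" by auto
    have xi: "x i > 0" using i cpos x[OF i(1)] by (cases "x i = 0") auto
    have vi: "norm (v $ i) = c * x i" using i xi by simp
    have "norm \<mu> * (c * x i) = norm (\<mu> * v $ i)" using vi by (simp add: norm_mult)
    also have "\<dots> = norm (\<Sum>j<n. complex_of_real (B $$ (i,j)) * v $ j)" using comp[OF i(1)] by simp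
    also have "\<dots> \<le> (\<Sum>j<n. norm (complex_of_real (B $$ (i,j)) * v $ j))" by (rule norm_sum)
    also have "\<dots> = (\<Sum>j<n. B $$ (i,j) * norm (v $ j))"
      using nonneg[OF i(1)] by (intro sum.cong) (auto simp: norm_mult)
    also have "\<dots> \<le> (\<Sum>j<n. B $$ (i,j) * (c * x j))"
      using nonneg[OF i(1)] bound by (intro sum_mono mult_left_mono) auto
    also have "\<dots> = c * (\<Sum>j<n. B $$ (i,j) * x j)" by (simp add: sum_distrib_left algebra_simps)
    also have "\<dots> \<le> c * (s * x i)" using le[OF i(1)] cpos by simp
    finally have "norm \<mu> * (c * x i) \<le> s * (c * x i)" by (simp add: algebra_simps)
    hence "norm \<mu> \<le> s" using cpos xi by simp
    thus ?thesis using r by simp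
  qed
qed

lemma mm_comp:
  assumes "M \<in> carrier_mat n n" "N \<in> carrier_mat n n" "i < n" "j < n"
  shows "(M * N) $$ (i,j) = (\<Sum>l<n. M $$ (i,l) * N $$ (l,j))"
  using assms by (auto simp: scalar_prod_def lessThan_atLeast0 intro!: sum.cong)

lemma nonneg_pow:
  assumes D: "D \<in> carrier_mat n n" and nn: "\<And>i j. i<n \<Longrightarrow> j<n \<Longrightarrow> D$$(i,j) \<ge> (0::real)"
  shows "i<n \<Longrightarrow> j<n \<Longrightarrow> (D ^\<^sub>m k)$$(i,j) \<ge> 0"
proof (induction k arbitrary: i j)
  case 0 thus ?case using D by simp
next
  case (Suc k)
  have "(D ^\<^sub>m Suc k) $$ (i,j) = (\<Sum>l<n. (D ^\<^sub>m k) $$ (i,l) * D $$ (l,j))"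
    using mm_comp[of "D ^\<^sub>m k" n D i j] D Suc.prems by simp
  also have "\<dots> \<ge> 0" using Suc nn by (intro sum_nonneg mult_nonneg_nonneg) auto
  finally show ?case .
qed

lemma growth:
  assumes D: "D \<in> carrier_mat n n" and nn: "\<And>i j. i<n \<Longrightarrow> j<n \<Longrightarrow> D$$(i,j) \<ge> (0::real)"
    and x: "\<And>j. j<n \<Longrightarrow> x j \<ge> 0"
    and q: "q \<ge> 0"
    and ge: "\<And>i. i<n \<Longrightarrow> (\<Sum>j<n. D $$ (i,j) * x j) \<ge> q * x i"
  shows "i<n \<Longrightarrow> (\<Sum>j<n. (D ^\<^sub>m k) $$ (i,j) * x j) \<ge> q ^ k * x i"
proof (induction k arbitrary: i)
  case 0
  have "(\<Sum>j<n. (D ^\<^sub>m 0) $$ (i,j) * x j) = (\<Sum>j<n. (if i = j then x j else 0))"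
    using 0 D by (intro sum.cong) auto
  also have "\<dots> = x i" using 0 by (simp add: sum.delta)
  finally show ?case by simp
next
  case (Suc k)
  have "(\<Sum>j<n. (D ^\<^sub>m Suc k) $$ (i,j) * x j) = (\<Sum>j<n. (\<Sum>l<n. (D ^\<^sub>m k) $$ (i,l) * D $$ (l,j)) * x j)"
    using mm_comp[of "D ^\<^sub>m k" n D i] D Suc.prems by (intro sum.cong) auto
  also have "\<dots> = (\<Sum>l<n. (D ^\<^sub>m k) $$ (i,l) * (\<Sum>j<n. D $$ (l,j) * x j))"
    by (simp add: sum_distrib_left sum_distrib_right mult.assoc) (rule sum.swap)
  also have "\<dots> \<ge> (\<Sum>l<n. (D ^\<^sub>m k) $$ (i,l) * (q * x l))"
    using nonneg_pow[OF D nn] Suc.prems ge by (intro sum_mono mult_left_mono) auto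
  also have "(\<Sum>l<n. (D ^\<^sub>m k) $$ (i,l) * (q * x l)) = q * (\<Sum>l<n. (D ^\<^sub>m k) $$ (i,l) * x l)"
    by (simp add: sum_distrib_left algebra_simps)
  finally have "q * (\<Sum>l<n. (D ^\<^sub>m k) $$ (i,l) * x l) \<le> (\<Sum>j<n. (D ^\<^sub>m Suc k) $$ (i,j) * x j)" .
  moreover have "q * (q ^ k * x i) \<le> q * (\<Sum>l<n. (D ^\<^sub>m k) $$ (i,l) * x l)"
    using Suc.IH[OF Suc.prems] q by (rule mult_left_mono)
  ultimately show ?case by simp
qed

lemma rho_ge:
  assumes B: "B \<in> carrier_mat n n" and n: "n > 0"
    and nonneg: "\<And>i j. i<n \<Longrightarrow> j<n \<Longrightarrow> B $$ (i,j) \<ge> 0"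
    and x: "\<And>j. j<n \<Longrightarrow> x j \<ge> 0" and i0: "i0 < n" "x i0 > 0"
    and ge: "\<And>i. i<n \<Longrightarrow> (\<Sum>j<n. B $$ (i,j) * x j) \<ge> s * x i"
    and s: "s > 0"
  shows "rho B \<ge> s"
proof (rule ccontr)
  assume "\<not> ?thesis"
  hence lt: "rho B < s" by simp
  have r0: "rho B \<ge> 0" by (rule rho_nonneg[OF B n])
  define t where "t = (rho B + s) / 2"
  have t: "t > 0" "rho B < t" "t < s" using lt r0 unfolding t_def by auto
  define D where "D = mat n n (\<lambda>(i,j). B $$ (i,j) / t)"
  have Dc: "D \<in> carrier_mat n n" unfolding D_def by simp
  have Dij: "D $$ (i,j) = B $$ (i,j) / t" if "i < n" "j < n" for i j
    using that unfolding D_def by simp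
  define C where "C = map_mat complex_of_real D"
  have Cc: "C \<in> carrier_mat n n" unfolding C_def using Dc by simp
  have Bcc: "map_mat complex_of_real B \<in> carrier_mat n n" using B by simp
  have sr: "spectral_radius C < 1"
  proof -
    from spectral_radius_mem_max(1)[OF Cc n] obtain \<mu> where
      mu: "\<mu> \<in> spectrum C" and r: "spectral_radius C = norm \<mu>" by auto
    from mu obtain v where ev: "eigenvector C v \<mu>"
      unfolding spectrum_def eigenvalue_def by auto
    from ev Cc have v: "v \<in> carrier_vec n" and vnz: "v \<noteq> 0\<^sub>v n"
      unfolding eigenvector_def by auto
    have comp: "\<mu> * v $ i = (\<Sum>j<n. complex_of_real (D $$ (i,j)) * v $ j)" if "i < n" for i
      using eig_comp[OF Dc ev[unfolded C_def] that] .
    have "map_mat complex_of_real B *\<^sub>v v = (complex_of_real t * \<mu>) \<cdot>\<^sub>v v"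
    proof (rule eq_vecI)
      fix i assume "i < dim_vec ((complex_of_real t * \<mu>) \<cdot>\<^sub>v v)"
      hence i: "i < n" using v by simp
      have "(map_mat complex_of_real B *\<^sub>v v) $ i = (\<Sum>j<n. complex_of_real (B $$ (i,j)) * v $ j)"
        using mv_comp[OF Bcc v i] B i by simp
      also have "\<dots> = (\<Sum>j<n. complex_of_real t * (complex_of_real (D $$ (i,j)) * v $ j))"
        using t(1) i by (intro sum.cong) (auto simp: Dij)
      also have "\<dots> = complex_of_real t * (\<mu> * v $ i)" using comp[OF i] by (simp add: sum_distrib_left)
      also have "\<dots> = ((complex_of_real t * \<mu>) \<cdot>\<^sub>v v) $ i" using v i by simp
      finally show "(map_mat complex_of_real B *\<^sub>v v) $ i = ((complex_of_real t * \<mu>) \<cdot>\<^sub>v v) $ i" .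
    qed (use v B in simp)
    hence "eigenvector (map_mat complex_of_real B) v (complex_of_real t * \<mu>)"
      unfolding eigenvector_def using v vnz B by simp
    hence "norm (complex_of_real t * \<mu>) \<in> norm ` spectrum (map_mat complex_of_real B)"
      unfolding spectrum_def eigenvalue_def by auto
    from spectral_radius_mem_max(2)[OF Bcc n this]
    have "t * norm \<mu> \<le> rho B" unfolding rho_def using t(1) by (simp add: norm_mult)
    hence "t * norm \<mu> < t * 1" using t(2) by linarith
    hence "norm \<mu> < 1" using t(1) by (simp only: mult_less_cancel_left_pos)
    thus ?thesis using r by simp
  qed
  from spectral_radius_jnf_norm_bound_less_1_upper_triangular[OF Cc sr]
  obtain c where c: "\<And>k. norm_bound (C ^\<^sub>m k) c" by auto
  have bnd: "\<bar>(D ^\<^sub>m k) $$ (i,j)\<bar> \<le> c" if "i < n" "j < n" for k i j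
  proof -
    have "C ^\<^sub>m k = map_mat complex_of_real (D ^\<^sub>m k)"
      unfolding C_def by (rule of_real_hom.mat_hom_pow[OF Dc, symmetric])
    with c[of k] that Dc show ?thesis unfolding norm_bound_def by auto
  qed
  define q where "q = s / t"
  have q: "q > 1" unfolding q_def using t by simp
  have Dnn: "D $$ (i,j) \<ge> 0" if "i < n" "j < n" for i j using Dij[OF that] nonneg[OF that] t(1) by simp
  have Dge: "(\<Sum>j<n. D $$ (i,j) * x j) \<ge> q * x i" if "i < n" for i
  proof -
    have "(\<Sum>j<n. D $$ (i,j) * x j) = (\<Sum>j<n. B $$ (i,j) * x j) / t"
      using that by (simp add: Dij sum_divide_distrib)
    also have "\<dots> \<ge> (s * x i) / t" using ge[OF that] t(1) by (simp add: divide_right_mono)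
    finally show ?thesis unfolding q_def by simp
  qed
  define X where "X = (\<Sum>j<n. x j)"
  obtain k where k: "c * X / x i0 < q ^ k" using real_arch_pow[OF q] by blast
  have "q ^ k * x i0 \<le> (\<Sum>j<n. (D ^\<^sub>m k) $$ (i0,j) * x j)"
    by (rule growth[OF Dc Dnn x _ Dge i0(1)]) (use q in auto)
  also have "\<dots> \<le> (\<Sum>j<n. c * x j)"
    using bnd i0(1) x by (intro sum_mono) (auto intro!: mult_right_mono dest: abs_le_D1)
  also have "\<dots> = c * X" unfolding X_def by (simp add: sum_distrib_left)
  finally have "q ^ k * x i0 \<le> c * X" .
  moreover have "c * X < q ^ k * x i0" using k i0(2) by (simp add: field_simps)
  ultimately show False by simp
qed

theorem theorem3p1:
  fixes A :: "real mat" and n :: nat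
  assumes "n \<ge> 1"
    and "A \<in> carrier_mat n n"
    and "\<forall>i<n. \<forall>j<n. A $$ (i, j) \<ge> 0"
  shows "Min (rho ` row_permuted n A) \<le> (\<Sum>i<n. \<Sum>j<n. A $$ (i, j)) / real n
       \<and> (\<Sum>i<n. \<Sum>j<n. A $$ (i, j)) / real n \<le> Max (rho ` row_permuted n A)"
proof -
  have n: "n > 0" using assms(1) by simp
  have Ann: "A $$ (i,j) \<ge> 0" if "i < n" "j < n" for i j using assms(3) that by blast
  define r where "r i = (\<Sum>j<n. A $$ (i,j))" for i
  define S where "S = (\<Sum>i<n. r i)"
  define s where "s = S / real n"
  have tot: "(\<Sum>i<n. \<Sum>j<n. A $$ (i, j)) / real n = s" unfolding s_def S_def r_def ..
  have rnn: "r i \<ge> 0" if "i<n" for i unfolding r_def using Ann that by (auto intro: sum_nonneg)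
  have S0: "S \<ge> 0" unfolding S_def using rnn by (auto intro: sum_nonneg)
  have s0: "s \<ge> 0" using S0 unfolding s_def by simp
  have rzero: "A $$ (i,l) = 0" if "i<n" "l<n" "r i = 0" for i l
    using sum_nonneg_eq_0_iff[of "{..<n}" "\<lambda>j. A $$ (i,j)"] Ann that unfolding r_def by auto
  have fin: "finite (rho ` row_permuted n A)" using finite_rp by simp
  have "\<forall>i. \<exists>k. k<n \<and> (\<Sum>j<n. A $$ (i, rotp n k j) * r j) * real n \<le> r i * S"
  proof
    fix i
    show "\<exists>k. k<n \<and> (\<Sum>j<n. A $$ (i, rotp n k j) * r j) * real n \<le> r i * S"
      using exists_rot_le[OF n, of "\<lambda>l. A $$ (i,l)" r] unfolding r_def[of i] S_def by blast
  qed
  then obtain kl where kl: "\<And>i. kl i < n" "\<And>i. (\<Sum>j<n. A $$ (i, rotp n (kl i) j) * r j) * real n \<le> r i * S"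
    by metis
  have "\<forall>i. \<exists>k. k<n \<and> (\<Sum>j<n. A $$ (i, rotp n k j) * r j) * real n \<ge> r i * S"
  proof
    fix i
    show "\<exists>k. k<n \<and> (\<Sum>j<n. A $$ (i, rotp n k j) * r j) * real n \<ge> r i * S"
      using exists_rot_ge[OF n, of "\<lambda>l. A $$ (i,l)" r] unfolding r_def[of i] S_def by blast
  qed
  then obtain ku where ku: "\<And>i. ku i < n" "\<And>i. (\<Sum>j<n. A $$ (i, rotp n (ku i) j) * r j) * real n \<ge> r i * S"
    by metis
  define Bl where "Bl = mat n n (\<lambda>(i,j). A $$ (i, rotp n (kl i) j))"
  define Bu where "Bu = mat n n (\<lambda>(i,j). A $$ (i, rotp n (ku i) j))"
  have Blc: "Bl \<in> carrier_mat n n" and Buc: "Bu \<in> carrier_mat n n" unfolding Bl_def Bu_def by auto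
  have Blij: "Bl $$ (i,j) = A $$ (i, rotp n (kl i) j)" if "i<n" "j<n" for i j
    using that unfolding Bl_def by simp
  have Buij: "Bu $$ (i,j) = A $$ (i, rotp n (ku i) j)" if "i<n" "j<n" for i j
    using that unfolding Bu_def by simp
  have Bl_in: "Bl \<in> row_permuted n A"
    unfolding row_permuted_def
  proof (intro CollectI conjI allI impI Blc)
    fix i assume "i < n"
    thus "\<exists>\<phi>. \<phi> permutes {..<n} \<and> (\<forall>j<n. Bl $$ (i, j) = A $$ (i, \<phi> j))"
      using Blij rotp_permutes[OF n] by blast
  qed
  have Bu_in: "Bu \<in> row_permuted n A"
    unfolding row_permuted_def
  proof (intro CollectI conjI allI impI Buc)
    fix i assume "i < n"
    thus "\<exists>\<phi>. \<phi> permutes {..<n} \<and> (\<forall>j<n. Bu $$ (i, j) = A $$ (i, \<phi> j))"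
      using Buij rotp_permutes[OF n] by blast
  qed
  have low: "rho Bl \<le> s"
  proof (rule rho_le[OF Blc n _ rnn _ _ s0])
    fix i j assume ij: "i < n" "j < n"
    show "Bl $$ (i,j) \<ge> 0" using Blij[OF ij] Ann[OF ij(1) rotp_lt[OF ij(2)]] by simp
    assume "r i = 0"
    thus "Bl $$ (i,j) = 0" using Blij[OF ij] rzero[OF ij(1) rotp_lt[OF ij(2)]] by simp
  next
    fix i assume i: "i < n"
    have "(\<Sum>j<n. Bl $$ (i,j) * r j) = (\<Sum>j<n. A $$ (i, rotp n (kl i) j) * r j)"
      using Blij i by (intro sum.cong) auto
    also have "\<dots> \<le> r i * S / real n" using kl(2)[of i] n by (simp add: pos_le_divide_eq)
    also have "\<dots> = s * r i" unfolding s_def by simp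
    finally show "(\<Sum>j<n. Bl $$ (i,j) * r j) \<le> s * r i" .
  qed
  have up: "s \<le> rho Bu"
  proof (cases "S = 0")
    case True
    thus ?thesis using rho_nonneg[OF Buc n] unfolding s_def by simp
  next
    case False
    hence Sp: "S > 0" using S0 by simp
    have "\<exists>i0<n. r i0 > 0"
    proof (rule ccontr)
      assume "\<not> ?thesis"
      hence "\<And>i. i < n \<Longrightarrow> r i \<le> 0" by auto
      hence "S \<le> 0" unfolding S_def by (intro sum_nonpos) auto
      thus False using Sp by simp
    qed
    then obtain i0 where i0: "i0 < n" "r i0 > 0" by blast
    show ?thesis
    proof (rule rho_ge[where x=r, OF Buc n _ rnn i0])
      fix i j assume ij: "i < n" "j < n"
      show "Bu $$ (i,j) \<ge> 0" using Buij[OF ij] Ann[OF ij(1) rotp_lt[OF ij(2)]] by simp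
    next
      fix i assume i: "i < n"
      have "(\<Sum>j<n. Bu $$ (i,j) * r j) = (\<Sum>j<n. A $$ (i, rotp n (ku i) j) * r j)"
        using Buij i by (intro sum.cong) auto
      moreover have "r i * S / real n \<le> (\<Sum>j<n. A $$ (i, rotp n (ku i) j) * r j)"
        using ku(2)[of i] n by (simp add: pos_divide_le_eq)
      moreover have "r i * S / real n = s * r i" unfolding s_def by simp
      ultimately show "s * r i \<le> (\<Sum>j<n. Bu $$ (i,j) * r j)" by simp
    next
      show "s > 0" using Sp n unfolding s_def by simp
    qed
  qed
  have "Min (rho ` row_permuted n A) \<le> rho Bl" using fin Bl_in by (intro Min_le) auto
  moreover have "rho Bu \<le> Max (rho ` row_permuted n A)" using fin Bu_in by (intro Max_ge) auto
  ultimately show ?thesis unfolding tot using low up by linarith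
qed

end
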